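(* Let \[D_1=\{t\in[a,b]\cap N_g^-: t\in (D_g\cap[a,t))'\},\quad D_2=\{t\in[a,b]\cap N_g^+: t\in (D_g\cap(t,b])'\},\] \[D_3=\{t\in[a,b]\setminus (N_g\cup D_g): t\in (D_g\cap[a,b])'\},\] and consider the restriction $\Delta g|_{[a,b]}$. For $t\in[a,b]$: 1. If $t^*\in D_1\cup D_2\cup D_3$, then $\Delta g|_{[a,b]}$ is $g$-differentiable at $t$ if and only if $\displaystyle\lim_{s\to t^*,\ s\in D_g}\frac{\Delta g|_{[a,b]}(s)}{g(s)-g(t)}=0$, the limit being the left-hand one if $t^*\in N_g^-$ and the right-hand one if $t^*\in N_g^+$. 2. In any other case, $\Delta g|_{[a,b]}$ is $g$-differentiable at $t$. Furthermore, if $\Delta g|_{[a,b]}$ is $g$-differentiable at $t$, then $(\Delta g|_{[a,b]})'_g(t)=-\chi_{D_g}(t^* )$. In particular, $\Delta g|_{[a,b]}$ is $g$-differentiable on $[a,b]$ with this derivative if $\displaystyle\lim_{s\to t,\ s\in D_g}\frac{\Delta g|_{[a,b]}(s)}{g(s)-g(t)}=0$ for all $t\in D_1\cup D_2\cup D_3$ (with the same convention on one-sided limits).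
   Context: Let $g:\mathbb R\to\mathbb R$ be nondecreasing and left-continuous. $\Delta g(t)=g(t^+)-g(t)$, $D_g=\{t:\Delta g(t)>0\}$, $C_g=\{t: g\text{ constant on }(t-\varepsilon,t+\varepsilon)\text{ for some }\varepsilon>0\}=\bigcup_{n\in\Lambda}(a_n,b_n)$ (disjoint union of connected components), $N_g^-=\{a_n\}\setminus D_g$, $N_g^+=\{b_n\}\setminus D_g$, $N_g=N_g^-\cup N_g^+$. Fix $a<b$ with $a\notin N_g^-$, $b\notin D_g\cup C_g\cup N_g^+$. For $t\in[a,b]$, $t^*=t$ if $t\notin C_g$ and $t^*=b_n$ if $t\in(a_n,b_n)$. The $g$-derivative of $u:[a,b]\to\mathbb R$ at $t$ is $u'_g(t)=\lim_{s\to t}\frac{u(s)-u(t)}{g(s)-g(t)}$ if $t\notin D_g\cup C_g$ and $u'_g(t)=\lim_{s\to t^{*+}}\frac{u(s)-u(t^* )}{g(s)-g(t^* )}$ if $t\in D_g\cup C_g$, provided the finite limit exists; limits are over $s\in[a,b]$ with nonzero denominator, and at points of $N_g^+\cup\{a\}$ only the right-hand limit, at points of $N_g^-\cup\{b\}$ only the left-hand limit is taken. $X'$ is the set of accumulation points of $X$; $\chi_{D_g}$ the indicator of $D_g$. *)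

theory Defs
  imports "HOL-Analysis.Analysis"
begin

definition deltag :: "(real \<Rightarrow> real) \<Rightarrow> real \<Rightarrow> real" where
  "deltag g t = Lim (at_right t) g - g t"

definition Dg :: "(real \<Rightarrow> real) \<Rightarrow> real set" where
  "Dg g = {t. deltag g t > 0}"

definition Cg :: "(real \<Rightarrow> real) \<Rightarrow> real set" where
  "Cg g = {t. \<exists>e>0. \<forall>s\<in>{t-e<..<t+e}. g s = g t}"

definition Nminus :: "(real \<Rightarrow> real) \<Rightarrow> real set" where
  "Nminus g = {x. \<exists>c\<in>Cg g. bdd_below (connected_component_set (Cg g) c)
                     \<and> x = Inf (connected_component_set (Cg g) c)} - Dg g"

definition Nplus :: "(real \<Rightarrow> real) \<Rightarrow> real set" where
  "Nplus g = {x. \<exists>c\<in>Cg g. bdd_above (connected_component_set (Cg g) c)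
                     \<and> x = Sup (connected_component_set (Cg g) c)} - Dg g"

definition Ng :: "(real \<Rightarrow> real) \<Rightarrow> real set" where
  "Ng g = Nminus g \<union> Nplus g"

definition tstar :: "(real \<Rightarrow> real) \<Rightarrow> real \<Rightarrow> real" where
  "tstar g t = (if t \<in> Cg g then Sup (connected_component_set (Cg g) t) else t)"

definition gside :: "(real \<Rightarrow> real) \<Rightarrow> real \<Rightarrow> real \<Rightarrow> real \<Rightarrow> real set" where
  "gside g a b t = (if t \<in> Nplus g \<or> t = a then {t<..}
                    else if t \<in> Nminus g \<or> t = b then {..<t} else UNIV)"

definition has_gderiv ::
  "(real \<Rightarrow> real) \<Rightarrow> real \<Rightarrow> real \<Rightarrow> (real \<Rightarrow> real) \<Rightarrow> real \<Rightarrow> real \<Rightarrow> bool" where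
  "has_gderiv g a b u t L =
     (if t \<in> Dg g \<union> Cg g then
        ((\<lambda>s. (u s - u (tstar g t)) / (g s - g (tstar g t))) \<longlongrightarrow> L)
          (at (tstar g t) within ({tstar g t<..} \<inter> {a..b} \<inter> {s. g s \<noteq> g (tstar g t)}))
      else
        ((\<lambda>s. (u s - u t) / (g s - g t)) \<longlongrightarrow> L)
          (at t within (gside g a b t \<inter> {a..b} \<inter> {s. g s \<noteq> g t})))"

definition g_differentiable ::
  "(real \<Rightarrow> real) \<Rightarrow> real \<Rightarrow> real \<Rightarrow> (real \<Rightarrow> real) \<Rightarrow> real \<Rightarrow> bool" where
  "g_differentiable g a b u t = (\<exists>L. has_gderiv g a b u t L)"

text \<open>Restriction of Delta g to [a,b] (values outside [a,b] are irrelevant).\<close>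
definition deltag_restr :: "(real \<Rightarrow> real) \<Rightarrow> real \<Rightarrow> real \<Rightarrow> real \<Rightarrow> real" where
  "deltag_restr g a b s = (if s \<in> {a..b} then deltag g s else 0)"

definition lside :: "(real \<Rightarrow> real) \<Rightarrow> real \<Rightarrow> real set" where
  "lside g x = (if x \<in> Nminus g then {..<x} else if x \<in> Nplus g then {x<..} else UNIV)"

definition D1 :: "(real \<Rightarrow> real) \<Rightarrow> real \<Rightarrow> real \<Rightarrow> real set" where
  "D1 g a b = {t \<in> {a..b} \<inter> Nminus g. t islimpt (Dg g \<inter> {a..<t})}"

definition D2 :: "(real \<Rightarrow> real) \<Rightarrow> real \<Rightarrow> real \<Rightarrow> real set" where
  "D2 g a b = {t \<in> {a..b} \<inter> Nplus g. t islimpt (Dg g \<inter> {t<..b})}"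

definition D3 :: "(real \<Rightarrow> real) \<Rightarrow> real \<Rightarrow> real \<Rightarrow> real set" where
  "D3 g a b = {t \<in> {a..b} - (Ng g \<union> Dg g). t islimpt (Dg g \<inter> {a..b})}"

end

theory Submission
  imports Defs
begin


lemma at_within_minus_self: "at x within (S - {x}) = at x within S"
  by (simp add: at_within_def)

locale gctx =
  fixes g :: "real \<Rightarrow> real"
  assumes mono: "mono g" and lc: "\<And>t. continuous (at_left t) g"
begin

lemma gm: "x \<le> y \<Longrightarrow> g x \<le> g y"
  using mono by (rule monoD)

lemma rlim: "(g \<longlongrightarrow> Inf (g ` {t<..})) (at_right t)"
proof -
  have "(g \<longlongrightarrow> Inf (g ` ({t<..} \<inter> UNIV))) (at t within ({t<..} \<inter> UNIV))"
    by (rule Lim_right_bound[where K="g t"]) (auto intro: monoD[OF mono])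
  thus ?thesis by simp
qed

lemma gp_eq: "Lim (at_right t) g = Inf (g ` {t<..})"
  using rlim tendsto_Lim trivial_limit_at_right_real by blast

lemma deltag_eq: "deltag g t = Inf (g ` {t<..}) - g t"
  by (simp add: deltag_def gp_eq)

lemma gp_ge: "g t \<le> Inf (g ` {t<..})"
  by (rule cInf_greatest) (auto intro: monoD[OF mono])

lemma gp_le: "t < s \<Longrightarrow> Inf (g ` {t<..}) \<le> g s"
  by (rule cInf_lower) (auto intro!: bdd_belowI[where m="g t"] monoD[OF mono])

lemma deltag_nonneg: "deltag g t \<ge> 0"
  using gp_ge deltag_eq by simp

lemma deltag_zero: "t \<notin> Dg g \<Longrightarrow> deltag g t = 0"
  unfolding Dg_def using deltag_nonneg[of t] by simp

lemma rcont: "t \<notin> Dg g \<Longrightarrow> (g \<longlongrightarrow> g t) (at_right t)"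
  using rlim[of t] deltag_zero[of t] deltag_eq[of t] by simp

lemma lcont: "(g \<longlongrightarrow> g t) (at_left t)"
  using lc[of t] by (simp add: continuous_within)

lemma Cg_open: "open (Cg g)"
  unfolding open_dist
proof safe
  fix x assume "x \<in> Cg g"
  then obtain e where e: "e > 0" "\<forall>s\<in>{x-e<..<x+e}. g s = g x" unfolding Cg_def by blast
  show "\<exists>e>0. \<forall>y. dist y x < e \<longrightarrow> y \<in> Cg g"
  proof (intro exI[of _ e] conjI allI impI)
    fix y assume y: "dist y x < e"
    define r where "r = dist y x"
    have r: "y - x \<le> r" "x - y \<le> r" "r < e" using y unfolding r_def dist_real_def by auto
    have H: "\<forall>s\<in>{y-(e-r)<..<y+(e-r)}. g s = g y"
    proof
      fix s assume "s \<in> {y-(e-r)<..<y+(e-r)}"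
      hence s: "y-(e-r) < s" "s < y+(e-r)" by auto
      have "x - e < s" "s < x + e" "x - e < y" "y < x + e" using s r by linarith+
      hence "s \<in> {x-e<..<x+e}" "y \<in> {x-e<..<x+e}" by auto
      hence "g s = g x" "g y = g x" using e(2) by blast+
      thus "g s = g y" by simp
    qed
    have "e - r > 0" using r by simp
    with H show "y \<in> Cg g" unfolding Cg_def mem_Collect_eq by (intro exI[of _ "e-r"] conjI)
  qed (use e in auto)
qed

lemma Cg_Dg: "t \<in> Cg g \<Longrightarrow> t \<notin> Dg g"
proof
  assume "t \<in> Cg g" "t \<in> Dg g"
  then obtain e where e: "e > 0" "\<forall>s\<in>{t-e<..<t+e}. g s = g t" unfolding Cg_def by blast
  have "Inf (g ` {t<..}) \<le> g (t + e/2)" by (rule gp_le) (use e in auto)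
  also have "\<dots> = g t" using bspec[OF e(2), of "t+e/2"] e(1) by simp
  finally show False using \<open>t \<in> Dg g\<close> unfolding Dg_def deltag_eq by simp
qed

lemma Cg_mono: "x < y \<Longrightarrow> g x = g y \<Longrightarrow> {x<..<y} \<subseteq> Cg g"
proof
  fix z assume xy: "x < y" "g x = g y" and z: "z \<in> {x<..<y}"
  let ?e = "min (z - x) (y - z)"
  have H: "\<forall>s\<in>{z-?e<..<z+?e}. g s = g z"
  proof
    fix s assume s: "s \<in> {z-?e<..<z+?e}"
    have "x \<le> s" "s \<le> y" "x \<le> z" "z \<le> y" using s z by auto
    hence "g x \<le> g s" "g s \<le> g y" "g x \<le> g z" "g z \<le> g y"
      by (simp_all add: gm)
    thus "g s = g z" using xy by simp
  qed
  have "?e > 0" using z by simp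
  with H show "z \<in> Cg g" unfolding Cg_def mem_Collect_eq by (intro exI[of _ ?e] conjI)
qed

lemma Cg_const:
  assumes "{c<..<d} \<subseteq> Cg g" "x \<in> {c<..<d}" "y \<in> {c<..<d}"
  shows "g x = g y"
proof (rule connected_local_const[where A="{c<..<d}" and f=g])
  show "\<forall>a\<in>{c<..<d}. eventually (\<lambda>b. g a = g b) (at a within {c<..<d})"
  proof
    fix a assume "a \<in> {c<..<d}"
    with assms obtain e where e: "e > 0" "\<forall>s\<in>{a-e<..<a+e}. g s = g a" unfolding Cg_def by blast
    have "\<forall>b\<in>{c<..<d}. b \<noteq> a \<and> dist b a < e \<longrightarrow> g a = g b"
    proof (intro ballI impI)
      fix b assume "b \<in> {c<..<d}" "b \<noteq> a \<and> dist b a < e"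
      hence "b \<in> {a-e<..<a+e}" by (auto simp: dist_real_def abs_less_iff)
      thus "g a = g b" using e(2) by metis
    qed
    thus "eventually (\<lambda>b. g a = g b) (at a within {c<..<d})"
      unfolding eventually_at using e(1) by blast
  qed
qed (use assms in auto)

end



lemma open_Inf_notin:
  fixes C :: "real set"
  assumes "open C" "bdd_below C" shows "Inf C \<notin> C"
proof
  assume "Inf C \<in> C"
  then obtain e where e: "e > 0" "ball (Inf C) e \<subseteq> C" using assms(1) open_contains_ball by blast
  hence "Inf C - e/2 \<in> C" by (auto simp: dist_real_def)
  hence "Inf C \<le> Inf C - e/2" using assms(2) by (rule cInf_lower)
  thus False using e by simp
qed

lemma open_Sup_notin:
  fixes C :: "real set"
  assumes "open C" "bdd_above C" shows "Sup C \<notin> C"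
proof
  assume "Sup C \<in> C"
  then obtain e where e: "e > 0" "ball (Sup C) e \<subseteq> C" using assms(1) open_contains_ball by blast
  hence "Sup C + e/2 \<in> C" by (auto simp: dist_real_def)
  hence "Sup C + e/2 \<le> Sup C" using assms(2) by (rule cSup_upper)
  thus False using e by simp
qed

lemma comp_interval:
  fixes S :: "real set"
  assumes "u \<in> connected_component_set S c" "v \<in> connected_component_set S c" "u \<le> z" "z \<le> v"
  shows "z \<in> connected_component_set S c"
proof -
  have "is_interval (connected_component_set S c)"
    using is_interval_connected_1 connected_connected_component by blast
  thus ?thesis using assms unfolding is_interval_1 by blast
qed

context gctx begin

lemma comp_open: "open (connected_component_set (Cg g) c)"
  using open_connected_component Cg_open by blast

lemma NminusD:
  assumes "x \<in> Nminus g" shows "\<exists>s>x. g s = g x"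
proof -
  from assms obtain c where c: "c \<in> Cg g" "bdd_below (connected_component_set (Cg g) c)"
      "x = Inf (connected_component_set (Cg g) c)" and xD: "x \<notin> Dg g"
    unfolding Nminus_def by blast
  define C where "C = connected_component_set (Cg g) c"
  have cC: "c \<in> C" unfolding C_def using c(1) by simp
  have xC: "x \<notin> C" using open_Inf_notin[OF comp_open c(2)] c(3) unfolding C_def by simp
  have "x \<le> c" using cInf_lower[OF cC] c(2,3) unfolding C_def by simp
  with cC xC have xc: "x < c" by (cases "x = c") auto
  have sub: "{x<..<c} \<subseteq> C"
  proof
    fix z assume z: "z \<in> {x<..<c}"
    have "Inf C < z" using z c(3) unfolding C_def by simp
    then obtain y where "y \<in> C" "y < z" using cInf_less_iff[of C z] cC c(2) unfolding C_def by blast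
    thus "z \<in> C" using comp_interval[of y "Cg g" c c z] cC z unfolding C_def by auto
  qed
  hence subC: "{x<..<c} \<subseteq> Cg g" unfolding C_def using connected_component_subset by blast
  define k where "k = g ((x+c)/2)"
  have gk: "\<forall>z\<in>{x<..<c}. g z = k" unfolding k_def
  proof
    fix z assume "z \<in> {x<..<c}"
    thus "g z = g ((x+c)/2)" by (rule Cg_const[OF subC]) (use xc in simp)
  qed
  have "eventually (\<lambda>z. g z = k) (at_right x)"
    unfolding eventually_at_right_field using xc gk by (intro exI[of _ c]) auto
  hence l1: "(g \<longlongrightarrow> k) (at_right x)" by (rule tendsto_eventually)
  have l2: "(g \<longlongrightarrow> g x) (at_right x)" using rcont xD by blast
  have gxk: "g x = k" using tendsto_unique[OF trivial_limit_at_right_real l2 l1] .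
  have "g ((x+c)/2) = k" unfolding k_def ..
  thus ?thesis using gxk xc by (intro exI[of _ "(x+c)/2"]) simp
qed

lemma NplusD:
  assumes "x \<in> Nplus g" shows "\<exists>s<x. g s = g x"
proof -
  from assms obtain c where c: "c \<in> Cg g" "bdd_above (connected_component_set (Cg g) c)"
      "x = Sup (connected_component_set (Cg g) c)"
    unfolding Nplus_def by blast
  define C where "C = connected_component_set (Cg g) c"
  have cC: "c \<in> C" unfolding C_def using c(1) by simp
  have xC: "x \<notin> C" using open_Sup_notin[OF comp_open c(2)] c(3) unfolding C_def by simp
  have "c \<le> x" using cSup_upper[OF cC] c(2,3) unfolding C_def by simp
  with cC xC have xc: "c < x" by (cases "x = c") auto
  have sub: "{c<..<x} \<subseteq> C"
  proof
    fix z assume z: "z \<in> {c<..<x}"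
    have "z < Sup C" using z c(3) unfolding C_def by simp
    then obtain y where "y \<in> C" "z < y" using less_cSup_iff[of C z] cC c(2) unfolding C_def by blast
    thus "z \<in> C" using comp_interval[of c "Cg g" c y z] cC z unfolding C_def by auto
  qed
  hence subC: "{c<..<x} \<subseteq> Cg g" unfolding C_def using connected_component_subset by blast
  define k where "k = g ((x+c)/2)"
  have gk: "\<forall>z\<in>{c<..<x}. g z = k" unfolding k_def
  proof
    fix z assume "z \<in> {c<..<x}"
    thus "g z = g ((x+c)/2)" by (rule Cg_const[OF subC]) (use xc in simp)
  qed
  have "eventually (\<lambda>z. g z = k) (at_left x)"
    unfolding eventually_at_left_field using xc gk by (intro exI[of _ c]) auto
  hence l1: "(g \<longlongrightarrow> k) (at_left x)" by (rule tendsto_eventually)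
  have l2: "(g \<longlongrightarrow> g x) (at_left x)" using lcont by blast
  have gxk: "g x = k" using tendsto_unique[OF trivial_limit_at_left_real l2 l1] .
  have "g ((x+c)/2) = k" unfolding k_def ..
  thus ?thesis using gxk xc by (intro exI[of _ "(x+c)/2"]) simp
qed

lemma NminusI:
  assumes "x \<notin> Cg g" "x \<notin> Dg g" "x < s" "g s = g x" shows "x \<in> Nminus g"
proof -
  have sub: "{x<..<s} \<subseteq> Cg g" using Cg_mono assms(3,4) by simp
  define m where "m = (x+s)/2"
  have m: "m \<in> {x<..<s}" using assms(3) unfolding m_def by simp
  hence mC: "m \<in> Cg g" using sub by blast
  define C where "C = connected_component_set (Cg g) m"
  have subC: "{x<..<s} \<subseteq> C" unfolding C_def
    by (rule connected_component_maximal[OF m]) (use sub in auto)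
  have mC': "m \<in> C" using m subC by blast
  have lb: "\<forall>y\<in>C. x < y"
  proof (rule ccontr)
    assume "\<not> (\<forall>y\<in>C. x < y)"
    then obtain y where "y \<in> C" "y \<le> x" by force
    hence "x \<in> C" using comp_interval[of y "Cg g" m m x] mC' m unfolding C_def by auto
    thus False using assms(1) connected_component_subset unfolding C_def by blast
  qed
  have bdd: "bdd_below C" using lb by (intro bdd_belowI[of _ x]) auto
  have "x \<le> Inf C" using lb mC' by (intro cInf_greatest) auto
  moreover have "Inf C \<le> Inf {x<..<s}" using subC bdd assms(3) by (intro cInf_superset_mono) auto
  ultimately have "x = Inf C" using assms(3) by simp
  thus ?thesis unfolding Nminus_def using mC bdd assms(2) unfolding C_def by blast
qed

lemma NplusI:
  assumes "x \<notin> Cg g" "x \<notin> Dg g" "s < x" "g s = g x" shows "x \<in> Nplus g"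
proof -
  have sub: "{s<..<x} \<subseteq> Cg g" using Cg_mono assms(3,4) by simp
  define m where "m = (x+s)/2"
  have m: "m \<in> {s<..<x}" using assms(3) unfolding m_def by simp
  hence mC: "m \<in> Cg g" using sub by blast
  define C where "C = connected_component_set (Cg g) m"
  have subC: "{s<..<x} \<subseteq> C" unfolding C_def
    by (rule connected_component_maximal[OF m]) (use sub in auto)
  have mC': "m \<in> C" using m subC by blast
  have ub: "\<forall>y\<in>C. y < x"
  proof (rule ccontr)
    assume "\<not> (\<forall>y\<in>C. y < x)"
    then obtain y where "y \<in> C" "x \<le> y" by force
    hence "x \<in> C" using comp_interval[of m "Cg g" m y x] mC' m unfolding C_def by auto
    thus False using assms(1) connected_component_subset unfolding C_def by blast
  qed
  have bdd: "bdd_above C" using ub by (intro bdd_aboveI[of _ x]) auto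
  have "Sup C \<le> x" using ub mC' by (intro cSup_least) auto
  moreover have "Sup {s<..<x} \<le> Sup C" using subC bdd assms(3) by (intro cSup_subset_mono) auto
  ultimately have "x = Sup C" using assms(3) by simp
  thus ?thesis unfolding Nplus_def using mC bdd assms(2) unfolding C_def by blast
qed

lemma Npm_disj: "x \<notin> Cg g \<Longrightarrow> x \<in> Nplus g \<Longrightarrow> x \<notin> Nminus g"
proof
  assume x: "x \<notin> Cg g" "x \<in> Nplus g" "x \<in> Nminus g"
  obtain s1 where s1: "s1 < x" "g s1 = g x" using NplusD x(2) by blast
  obtain s2 where s2: "x < s2" "g s2 = g x" using NminusD x(3) by blast
  have "{s1<..<s2} \<subseteq> Cg g" using Cg_mono[of s1 s2] s1 s2 by simp
  thus False using x(1) s1 s2 by auto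
qed

end



lemma limpt_minus_countable:
  fixes I D :: "real set"
  assumes I: "is_interval I" and D: "countable D" and x: "x islimpt I"
  shows "x islimpt (I - D)"
  unfolding islimpt_approachable
proof (intro allI impI)
  fix e :: real assume e: "e > 0"
  obtain y1 where y1: "y1 \<in> I" "y1 \<noteq> x" "dist y1 x < e" using x e unfolding islimpt_approachable by blast
  have "dist y1 x > 0" using y1 by simp
  then obtain y2 where y2: "y2 \<in> I" "y2 \<noteq> x" "dist y2 x < dist y1 x"
    using x unfolding islimpt_approachable by blast
  have a1: "x - e < y1" "y1 < x + e" using y1(3) by (simp_all add: dist_real_def abs_less_iff)
  have "dist y2 x < e" using y2(3) y1(3) by linarith
  hence a2: "x - e < y2" "y2 < x + e" by (simp_all add: dist_real_def abs_less_iff)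
  have "y1 \<noteq> y2" using y2(3) by auto
  define lo where "lo = min y1 y2"
  define hi where "hi = max y1 y2"
  have lohi: "lo < hi" "lo \<in> I" "hi \<in> I" "x - e < lo" "hi < x + e"
    using \<open>y1 \<noteq> y2\<close> y1 y2 a1 a2 unfolding lo_def hi_def by (auto simp: min_def max_def)
  define U where "U = {lo<..<hi} - {x}"
  have "open U" unfolding U_def by (intro open_Diff) auto
  define d where "d = (hi - lo)/3"
  have d: "d > 0" "hi = lo + 3*d" using lohi(1) unfolding d_def by (auto simp: field_simps)
  have q: "lo < lo + d" "lo + d < hi" "lo < lo + 2*d" "lo + 2*d < hi" "lo + d < lo + 2*d"
    using d by linarith+
  hence p: "lo + d \<in> {lo<..<hi}" "lo + 2*d \<in> {lo<..<hi}" "lo + d \<noteq> lo + 2*d"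
    by simp_all
  have "U \<noteq> {}"
  proof (cases "lo + d = x")
    case True
    hence "lo + 2*d \<in> U" using p unfolding U_def by auto
    thus ?thesis by blast
  next
    case False
    hence "lo + d \<in> U" using p unfolding U_def by auto
    thus ?thesis by blast
  qed
  then obtain z where z: "z \<in> U" "z \<notin> D" using open_minus_countable[OF D _ \<open>open U\<close>] by blast
  have zb: "lo < z" "z < hi" "z \<noteq> x" using z(1) unfolding U_def by auto
  have "z \<in> I" using I lohi zb unfolding is_interval_1 by (meson less_imp_le)
  moreover have "dist z x < e" using zb lohi by (simp add: dist_real_def abs_less_iff)
  ultimately show "\<exists>x'\<in>I - D. x' \<noteq> x \<and> dist x' x < e" using z zb by blast
qed

lemma core:
  fixes f :: "real \<Rightarrow> real" and I D :: "real set"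
  assumes I: "is_interval I" and D: "countable D" and f0: "\<And>s. s \<in> I \<Longrightarrow> s \<notin> D \<Longrightarrow> f s = 0"
  shows core_c: "(f \<longlongrightarrow> 0) (at x within (D \<inter> I)) \<Longrightarrow> (f \<longlongrightarrow> 0) (at x within I)"
    and core_b: "\<not> x islimpt (D \<inter> I) \<Longrightarrow> (f \<longlongrightarrow> 0) (at x within I)"
    and core_d: "(f \<longlongrightarrow> L) (at x within I) \<Longrightarrow> (f \<longlongrightarrow> 0) (at x within I)"
    and core_a: "(\<exists>L. (f \<longlongrightarrow> L) (at x within I)) \<longleftrightarrow> (f \<longlongrightarrow> 0) (at x within (D \<inter> I))"
proof -
  have ev: "eventually (\<lambda>s. f s = 0) (at x within (I - D))"
    unfolding eventually_at_filter using f0 by (intro always_eventually) auto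
  have zero: "(f \<longlongrightarrow> 0) (at x within (I - D))" using ev by (rule tendsto_eventually)
  have Ieq: "I = (D \<inter> I) \<union> (I - D)" by blast
  show cc: "(f \<longlongrightarrow> 0) (at x within (D \<inter> I)) \<Longrightarrow> (f \<longlongrightarrow> 0) (at x within I)"
  proof -
    assume h: "(f \<longlongrightarrow> 0) (at x within (D \<inter> I))"
    have "(f \<longlongrightarrow> 0) (at x within ((D \<inter> I) \<union> (I - D)))" using h zero Lim_within_Un by blast
    thus ?thesis using Ieq by simp
  qed
  show "\<not> x islimpt (D \<inter> I) \<Longrightarrow> (f \<longlongrightarrow> 0) (at x within I)"
  proof -
    assume "\<not> x islimpt (D \<inter> I)"
    hence "at x within (D \<inter> I) = bot" using trivial_limit_within by blast
    hence "(f \<longlongrightarrow> 0) (at x within (D \<inter> I))" by simp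
    thus ?thesis by (rule cc)
  qed
  show cd: "\<And>L. (f \<longlongrightarrow> L) (at x within I) \<Longrightarrow> (f \<longlongrightarrow> 0) (at x within I)"
  proof -
    fix L assume h: "(f \<longlongrightarrow> L) (at x within I)"
    show "(f \<longlongrightarrow> 0) (at x within I)"
    proof (cases "x islimpt I")
      case True
      hence "x islimpt (I - D)" using limpt_minus_countable[OF I D] by blast
      hence nb: "at x within (I - D) \<noteq> bot" using trivial_limit_within by blast
      have "(f \<longlongrightarrow> L) (at x within (I - D))" using h by (rule tendsto_within_subset) auto
      hence "L = 0" using tendsto_unique[OF nb _ zero] by blast
      thus ?thesis using h by simp
    next
      case False
      hence "at x within I = bot" using trivial_limit_within by blast
      thus ?thesis by simp
    qed
  qed
  show "(\<exists>L. (f \<longlongrightarrow> L) (at x within I)) \<longleftrightarrow> (f \<longlongrightarrow> 0) (at x within (D \<inter> I))"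
  proof
    assume "\<exists>L. (f \<longlongrightarrow> L) (at x within I)"
    then obtain L where "(f \<longlongrightarrow> L) (at x within I)" by blast
    hence "(f \<longlongrightarrow> 0) (at x within I)" by (rule cd)
    thus "(f \<longlongrightarrow> 0) (at x within (D \<inter> I))" by (rule tendsto_within_subset) auto
  next
    assume "(f \<longlongrightarrow> 0) (at x within (D \<inter> I))"
    thus "\<exists>L. (f \<longlongrightarrow> L) (at x within I)" using cc by blast
  qed
qed

context gctx begin

lemma Dg_countable: "countable (Dg g)"
proof (rule countable_subset[OF _ mono_ctble_discont[OF mono]])
  show "Dg g \<subseteq> {a. \<not> isCont g a}"
  proof
    fix t assume t: "t \<in> Dg g"
    show "t \<in> {a. \<not> isCont g a}"
    proof
      show "\<not> isCont g t"
      proof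
        assume "isCont g t"
        hence "(g \<longlongrightarrow> g t) (at t within UNIV)" by (simp add: isCont_def)
        hence "(g \<longlongrightarrow> g t) (at_right t)" by (rule tendsto_within_subset) auto
        hence "Inf (g ` {t<..}) = g t" using tendsto_unique[OF trivial_limit_at_right_real rlim] by blast
        thus False using t unfolding Dg_def deltag_eq by simp
      qed
    qed
  qed
qed

lemma delta_right_lim: "(deltag g \<longlongrightarrow> 0) (at_right x)"
proof -
  define P where "P = Inf (g ` {x<..})"
  have r: "(g \<longlongrightarrow> P) (at_right x)" unfolding P_def by (rule rlim)
  have lin: "((\<lambda>s. 2 * s - x) \<longlongrightarrow> 2*x - x) (at_right x)" by (intro tendsto_intros)
  have ev1: "eventually (\<lambda>s. 2 * s - x > x) (at_right x)"
    using eventually_at_right_less[of x] by eventually_elim simp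
  have "filterlim (\<lambda>s. 2 * s - x) (at_right x) (at_right x)"
    using lin ev1 tendsto_imp_filterlim_at_right[of "\<lambda>s. 2 * s - x" x "at_right x"] by simp
  hence r2: "((\<lambda>s. g (2 * s - x)) \<longlongrightarrow> P) (at_right x)" using filterlim_compose[OF r] by blast
  have up: "((\<lambda>s. g (2 * s - x) - g s) \<longlongrightarrow> P - P) (at_right x)" using r r2 by (intro tendsto_intros)
  have ev2: "eventually (\<lambda>s. (0::real) \<le> deltag g s) (at_right x)" using deltag_nonneg by simp
  have ev3: "eventually (\<lambda>s. deltag g s \<le> g (2 * s - x) - g s) (at_right x)"
    using eventually_at_right_less[of x]
  proof eventually_elim
    case (elim s)
    have "Inf (g ` {s<..}) \<le> g (2 * s - x)" using elim by (intro gp_le) simp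
    thus ?case unfolding deltag_eq by simp
  qed
  show ?thesis using tendsto_sandwich[OF ev2 ev3 tendsto_const] up by simp
qed

lemma jump:
  assumes x: "x \<in> Dg g" "a \<le> x" "x < b"
  shows "((\<lambda>s. (deltag_restr g a b s - deltag_restr g a b x) / (g s - g x)) \<longlongrightarrow> -1)
           (at x within ({x<..} \<inter> {a..b} \<inter> {s. g s \<noteq> g x}))"
proof -
  define P where "P = Inf (g ` {x<..})"
  have dx: "deltag_restr g a b x = P - g x" using x unfolding deltag_restr_def deltag_eq P_def by simp
  have pos: "P - g x > 0" using x(1) unfolding Dg_def deltag_eq P_def by simp
  have ev: "eventually (\<lambda>s. deltag g s = deltag_restr g a b s) (at_right x)"
    unfolding eventually_at_right_field using x by (intro exI[of _ b]) (auto simp: deltag_restr_def)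
  have u0: "(deltag_restr g a b \<longlongrightarrow> 0) (at_right x)"
    using Lim_transform_eventually[OF delta_right_lim ev] .
  have r: "(g \<longlongrightarrow> P) (at_right x)" unfolding P_def by (rule rlim)
  have "((\<lambda>s. (deltag_restr g a b s - deltag_restr g a b x) / (g s - g x)) \<longlongrightarrow> (0 - (P - g x)) / (P - g x)) (at_right x)"
    unfolding dx using u0 r pos by (intro tendsto_intros) auto
  moreover have "(0 - (P - g x)) / (P - g x) = -1" using pos by (simp add: field_simps)
  ultimately have "((\<lambda>s. (deltag_restr g a b s - deltag_restr g a b x) / (g s - g x)) \<longlongrightarrow> -1) (at x within {x<..})"
    by simp
  thus ?thesis by (rule tendsto_within_subset) auto
qed

end



context gctx begin

lemma tstar_props:
  assumes t: "t \<in> Cg g" "t \<le> b" and bC: "b \<notin> Cg g"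
  shows "t < tstar g t \<and> tstar g t \<le> b \<and> g (tstar g t) = g t \<and> tstar g t \<notin> Cg g
         \<and> tstar g t \<notin> Nminus g \<and> (tstar g t \<in> Dg g \<or> tstar g t \<in> Nplus g)"
proof -
  define C where "C = connected_component_set (Cg g) t"
  define x where "x = Sup C"
  have xt: "tstar g t = x" unfolding x_def C_def tstar_def using t(1) by simp
  have tC: "t \<in> C" unfolding C_def using t(1) by simp
  have ltb: "\<forall>y\<in>C. y < b"
  proof (rule ccontr)
    assume "\<not> (\<forall>y\<in>C. y < b)"
    then obtain y where "y \<in> C" "b \<le> y" by force
    hence "b \<in> C" using comp_interval[of t "Cg g" t y b] tC t(2) unfolding C_def by auto
    thus False using bC connected_component_subset unfolding C_def by blast
  qed
  have bdd: "bdd_above C" using ltb by (intro bdd_aboveI[of _ b]) auto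
  have xC: "x \<notin> C" unfolding x_def using open_Sup_notin[OF comp_open] bdd unfolding C_def by blast
  have "t \<le> x" unfolding x_def using cSup_upper[OF tC bdd] .
  with tC xC have tx: "t < x" by (cases "t = x") auto
  have xb: "x \<le> b" unfolding x_def using ltb tC by (intro cSup_least) auto
  have sub: "{t<..<x} \<subseteq> C"
  proof
    fix z assume z: "z \<in> {t<..<x}"
    have "z < Sup C" using z unfolding x_def by simp
    then obtain y where "y \<in> C" "z < y" using less_cSup_iff[of C z] tC bdd by blast
    thus "z \<in> C" using comp_interval[of t "Cg g" t y z] tC z unfolding C_def by auto
  qed
  hence subC: "{t<..<x} \<subseteq> Cg g" unfolding C_def using connected_component_subset by blast
  define k where "k = g ((t+x)/2)"
  have gk: "\<forall>z\<in>{t<..<x}. g z = k" unfolding k_def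
  proof
    fix z assume "z \<in> {t<..<x}"
    thus "g z = g ((t+x)/2)" by (rule Cg_const[OF subC]) (use tx in simp)
  qed
  obtain e where e: "e > 0" "\<forall>s\<in>{t-e<..<t+e}. g s = g t" using t(1) unfolding Cg_def by blast
  define s0 where "s0 = t + min e (x - t) / 2"
  have s0: "s0 \<in> {t-e<..<t+e}" "s0 \<in> {t<..<x}" unfolding s0_def using e(1) tx by (auto simp: min_def field_simps)
  have gt: "g t = k" using bspec[OF e(2) s0(1)] bspec[OF gk s0(2)] by simp
  have "eventually (\<lambda>z. g z = k) (at_left x)"
    unfolding eventually_at_left_field using tx gk by (intro exI[of _ t]) auto
  hence l1: "(g \<longlongrightarrow> k) (at_left x)" by (rule tendsto_eventually)
  have l2: "(g \<longlongrightarrow> g x) (at_left x)" using lcont by blast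
  have gx: "g x = k" using tendsto_unique[OF trivial_limit_at_left_real l2 l1] .
  have noeq: "\<And>s. x < s \<Longrightarrow> g s \<noteq> g x"
  proof
    fix s assume s: "x < s" "g s = g x"
    have "{t<..<s} \<subseteq> Cg g" using Cg_mono[of t s] s tx gx gt by simp
    define m where "m = (t+x)/2"
    have m: "m \<in> {t<..<s}" "m \<in> C" unfolding m_def using tx s sub by auto
    have "{t<..<s} \<subseteq> connected_component_set (Cg g) m"
      by (rule connected_component_maximal) (use m \<open>{t<..<s} \<subseteq> Cg g\<close> in auto)
    also have "\<dots> = C" unfolding C_def by (rule connected_component_eq) (use m C_def in simp)
    finally have "x \<in> C" using tx s by auto
    thus False using xC by simp
  qed
  have xCg: "x \<notin> Cg g"
  proof
    assume "x \<in> Cg g"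
    then obtain e' where e': "e' > 0" "\<forall>s\<in>{x-e'<..<x+e'}. g s = g x" unfolding Cg_def by blast
    have "x + e'/2 \<in> {x-e'<..<x+e'}" using e'(1) by simp
    hence "g (x + e'/2) = g x" using e'(2) by blast
    thus False using noeq[of "x + e'/2"] e'(1) by simp
  qed
  have xNm: "x \<notin> Nminus g"
  proof
    assume "x \<in> Nminus g"
    then obtain s where "x < s" "g s = g x" using NminusD by blast
    thus False using noeq by blast
  qed
  have "x \<in> Dg g \<or> x \<in> Nplus g"
  proof (cases "x \<in> Dg g")
    case False
    have "x \<in> {x. \<exists>c\<in>Cg g. bdd_above (connected_component_set (Cg g) c)
                     \<and> x = Sup (connected_component_set (Cg g) c)}"
      using t(1) bdd unfolding x_def C_def by blast
    thus ?thesis using False unfolding Nplus_def by blast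
  qed simp
  thus ?thesis unfolding xt using tx xb gx gt xCg xNm by simp
qed

lemma u_zero: "s \<notin> Dg g \<Longrightarrow> deltag_restr g a b s = 0"
  unfolding deltag_restr_def using deltag_zero by simp

lemma Mlem:
  assumes ab: "a < b" "a \<notin> Nminus g" "b \<notin> Dg g \<union> Cg g \<union> Nplus g"
    and x: "a \<le> x" "x \<le> b" "x \<notin> Cg g" "x \<notin> Dg g"
  shows "\<exists>I. is_interval I \<and> at x within (gside g a b x \<inter> {a..b} \<inter> {s. g s \<noteq> g x}) = at x within I
           \<and> Dg g \<inter> {a..b} \<inter> lside g x = Dg g \<inter> I
           \<and> (x \<notin> D1 g a b \<union> D2 g a b \<union> D3 g a b \<longrightarrow> \<not> x islimpt (Dg g \<inter> I))"
proof (cases "x \<in> Nplus g")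
  case P: True
  have nm: "x \<notin> Nminus g" using Npm_disj x(3) P by blast
  have ne: "\<And>s. x < s \<Longrightarrow> g s \<noteq> g x" using NminusI x(3,4) nm by blast
  have gs: "gside g a b x = {x<..}" by (simp add: gside_def P)
  have ls: "lside g x = {x<..}" by (simp add: lside_def nm P)
  have e1: "gside g a b x \<inter> {a..b} \<inter> {s. g s \<noteq> g x} = {x<..b}"
    unfolding gs using ne x(1) by auto
  have e2: "Dg g \<inter> {a..b} \<inter> lside g x = Dg g \<inter> {x<..b}" unfolding ls using x(1) by auto
  have iv: "is_interval {x<..b}" unfolding is_interval_1 by auto
  have "x \<notin> D1 g a b \<union> D2 g a b \<union> D3 g a b \<longrightarrow> \<not> x islimpt (Dg g \<inter> {x<..b})"
    unfolding D2_def using x(1,2) P by auto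
  thus ?thesis using e1 e2 iv by (intro exI[of _ "{x<..b}"]) simp
next
  case NP: False
  show ?thesis
  proof (cases "x \<in> Nminus g")
    case M: True
    have xa: "x \<noteq> a" using M ab(2) by blast
    have ne: "\<And>s. s < x \<Longrightarrow> g s \<noteq> g x" using NplusI x(3,4) NP by blast
    have gs: "gside g a b x = {..<x}" by (simp add: gside_def NP M xa)
    have ls: "lside g x = {..<x}" by (simp add: lside_def M)
    have e1: "gside g a b x \<inter> {a..b} \<inter> {s. g s \<noteq> g x} = {a..<x}"
      unfolding gs using ne x(2) by auto
    have e2: "Dg g \<inter> {a..b} \<inter> lside g x = Dg g \<inter> {a..<x}" unfolding ls using x(2) by auto
    have iv: "is_interval {a..<x}" unfolding is_interval_1 by auto
    have "x \<notin> D1 g a b \<union> D2 g a b \<union> D3 g a b \<longrightarrow> \<not> x islimpt (Dg g \<inter> {a..<x})"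
      unfolding D1_def using x(1,2) M by auto
    thus ?thesis using e1 e2 iv by (intro exI[of _ "{a..<x}"]) simp
  next
    case NM: False
    have ne1: "\<And>s. s < x \<Longrightarrow> g s \<noteq> g x" using NplusI x(3,4) NP by blast
    have ne2: "\<And>s. x < s \<Longrightarrow> g s \<noteq> g x" using NminusI x(3,4) NM by blast
    have ls: "lside g x = UNIV" by (simp add: lside_def NM NP)
    have e0: "gside g a b x \<inter> {a..b} - {x} = {a..b} - {x}"
      unfolding gside_def using NP NM ab(1) by auto
    have e1: "gside g a b x \<inter> {a..b} \<inter> {s. g s \<noteq> g x} = {a..b} - {x}"
    proof -
      have "gside g a b x \<inter> {a..b} \<inter> {s. g s \<noteq> g x} = gside g a b x \<inter> {a..b} - {x}"
      proof (intro set_eqI iffI)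
        fix s assume "s \<in> gside g a b x \<inter> {a..b} - {x}"
        thus "s \<in> gside g a b x \<inter> {a..b} \<inter> {s. g s \<noteq> g x}"
          using ne1[of s] ne2[of s] by (cases "s < x") auto
      qed auto
      thus ?thesis using e0 by simp
    qed
    have "at x within (gside g a b x \<inter> {a..b} \<inter> {s. g s \<noteq> g x}) = at x within {a..b}"
      unfolding e1 by (rule at_within_minus_self)
    moreover have e2: "Dg g \<inter> {a..b} \<inter> lside g x = Dg g \<inter> {a..b}" unfolding ls by auto
    moreover have iv: "is_interval {a..b}" unfolding is_interval_1 by auto
    moreover have "x \<notin> D1 g a b \<union> D2 g a b \<union> D3 g a b \<longrightarrow> \<not> x islimpt (Dg g \<inter> {a..b})"
      unfolding D3_def Ng_def using x NM NP by auto
    ultimately show ?thesis by (intro exI[of _ "{a..b}"]) simp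
  qed
qed

lemma pt:
  assumes ab: "a < b" "a \<notin> Nminus g" "b \<notin> Dg g \<union> Cg g \<union> Nplus g" and t: "a \<le> t" "t \<le> b"
  shows "(tstar g t \<in> D1 g a b \<union> D2 g a b \<union> D3 g a b \<longrightarrow>
            (g_differentiable g a b (deltag_restr g a b) t \<longleftrightarrow>
             ((\<lambda>s. deltag_restr g a b s / (g s - g t)) \<longlongrightarrow> 0)
               (at (tstar g t) within (Dg g \<inter> {a..b} \<inter> lside g (tstar g t)))))
       \<and> (tstar g t \<notin> D1 g a b \<union> D2 g a b \<union> D3 g a b \<longrightarrow>
            g_differentiable g a b (deltag_restr g a b) t)
       \<and> (g_differentiable g a b (deltag_restr g a b) t \<longrightarrow>
            has_gderiv g a b (deltag_restr g a b) t (- indicator (Dg g) (tstar g t)))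
       \<and> (((\<lambda>s. deltag_restr g a b s / (g s - g (tstar g t))) \<longlongrightarrow> 0)
               (at (tstar g t) within (Dg g \<inter> {a..b} \<inter> lside g (tstar g t)))
            \<longrightarrow> has_gderiv g a b (deltag_restr g a b) t (- indicator (Dg g) (tstar g t)))"
proof -
  have bC: "b \<notin> Cg g" using ab(3) by blast
  define u where "u = deltag_restr g a b"
  define x where "x = tstar g t"
  define DD where "DD = D1 g a b \<union> D2 g a b \<union> D3 g a b"
  have DDn: "\<And>y. y \<in> Dg g \<Longrightarrow> y \<notin> DD"
    unfolding DD_def D1_def D2_def D3_def Nminus_def Nplus_def by auto
  show ?thesis
  proof (cases "x \<in> Dg g")
    case J: True
    have tDC: "t \<in> Dg g \<union> Cg g"
    proof (rule ccontr)
      assume "t \<notin> Dg g \<union> Cg g"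
      hence "x = t" "t \<notin> Dg g" unfolding x_def tstar_def by auto
      thus False using J by simp
    qed
    have xab: "a \<le> x" "x < b"
    proof -
      have "a \<le> x \<and> x \<le> b"
      proof (cases "t \<in> Cg g")
        case True
        thus ?thesis using tstar_props[OF True t(2) bC] ab(3) t(1) unfolding x_def by auto
      next
        case False
        thus ?thesis using t unfolding x_def tstar_def by simp
      qed
      moreover have "x \<noteq> b" using J ab(3) by blast
      ultimately show "a \<le> x" "x < b" by auto
    qed
    have hd: "\<And>L. has_gderiv g a b u t L \<longleftrightarrow>
      ((\<lambda>s. (u s - u x) / (g s - g x)) \<longlongrightarrow> L) (at x within ({x<..} \<inter> {a..b} \<inter> {s. g s \<noteq> g x}))"
      unfolding has_gderiv_def x_def using tDC by simp
    have H: "has_gderiv g a b u t (- indicator (Dg g) x)"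
      unfolding hd using jump[OF J xab] J unfolding u_def by simp
    hence "g_differentiable g a b u t" unfolding g_differentiable_def by blast
    thus ?thesis using H DDn[OF J] unfolding u_def[symmetric] x_def[symmetric] DD_def[symmetric] by blast
  next
    case NJ: False
    define F where "F = at x within (gside g a b x \<inter> {a..b} \<inter> {s. g s \<noteq> g x})"
    define f where "f = (\<lambda>s. u s / (g s - g x))"
    have ux: "u x = 0" unfolding u_def using u_zero NJ by blast
    have props: "x \<notin> Cg g" "a \<le> x" "x \<le> b" "g x = g t"
      and hd: "\<And>L. has_gderiv g a b u t L \<longleftrightarrow> (f \<longlongrightarrow> L) F"
    proof -
      have "x \<notin> Cg g \<and> a \<le> x \<and> x \<le> b \<and> g x = g t \<and> (\<forall>L. has_gderiv g a b u t L \<longleftrightarrow> (f \<longlongrightarrow> L) F)"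
      proof (cases "t \<in> Cg g")
        case True
        note tp = tstar_props[OF True t(2) bC]
        have xN: "x \<in> Nplus g" using tp NJ unfolding x_def by blast
        have gs: "gside g a b x = {x<..}" by (simp add: gside_def xN)
        have "\<forall>L. has_gderiv g a b u t L \<longleftrightarrow> (f \<longlongrightarrow> L) F"
          unfolding has_gderiv_def F_def f_def gs using True ux unfolding x_def by simp
        thus ?thesis using tp t ab(3) unfolding x_def by auto
      next
        case False
        have tD: "t \<notin> Dg g" using NJ False unfolding x_def tstar_def by simp
        have xt: "x = t" using False unfolding x_def tstar_def by simp
        have "\<forall>L. has_gderiv g a b u t L \<longleftrightarrow> (f \<longlongrightarrow> L) F"
          unfolding has_gderiv_def F_def f_def using False tD ux unfolding xt by simp
        thus ?thesis using t False xt by simp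
      qed
      thus "x \<notin> Cg g" "a \<le> x" "x \<le> b" "g x = g t" "\<And>L. has_gderiv g a b u t L \<longleftrightarrow> (f \<longlongrightarrow> L) F"
        by auto
    qed
    obtain I where I: "is_interval I" "F = at x within I"
      "Dg g \<inter> {a..b} \<inter> lside g x = Dg g \<inter> I"
      "x \<notin> DD \<longrightarrow> \<not> x islimpt (Dg g \<inter> I)"
      using Mlem[OF ab props(2,3,1) NJ] unfolding F_def DD_def by blast
    have f0: "\<And>s. s \<in> I \<Longrightarrow> s \<notin> Dg g \<Longrightarrow> f s = 0"
      unfolding f_def u_def using u_zero by simp
    note cr = core[where f=f and I=I and D="Dg g", OF I(1) Dg_countable f0]
    have feq: "(\<lambda>s. u s / (g s - g t)) = f" unfolding f_def props(4) ..
    have ind: "indicator (Dg g) x = (0::real)" using NJ by simp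
    have gd: "g_differentiable g a b u t \<longleftrightarrow> (\<exists>L. (f \<longlongrightarrow> L) (at x within I))"
      unfolding g_differentiable_def hd I(2) ..
    have c1: "g_differentiable g a b u t \<longleftrightarrow>
             ((\<lambda>s. u s / (g s - g t)) \<longlongrightarrow> 0) (at x within (Dg g \<inter> {a..b} \<inter> lside g x))"
      unfolding gd feq I(3) using cr(4) .
    have c2: "x \<notin> DD \<longrightarrow> g_differentiable g a b u t"
      unfolding gd using cr(2) I(4) by blast
    have c3: "g_differentiable g a b u t \<longrightarrow> has_gderiv g a b u t (- indicator (Dg g) x)"
      unfolding gd hd I(2) ind using cr(3) by auto
    have c4: "((\<lambda>s. u s / (g s - g x)) \<longlongrightarrow> 0) (at x within (Dg g \<inter> {a..b} \<inter> lside g x))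
              \<longrightarrow> has_gderiv g a b u t (- indicator (Dg g) x)"
      unfolding hd I(2) I(3) ind f_def[symmetric] using cr(1) by simp
    show ?thesis using c1 c2 c3 c4 unfolding u_def[symmetric] x_def[symmetric] DD_def[symmetric] by blast
  qed
qed

end

theorem corollary3p6:
  fixes g :: "real \<Rightarrow> real" and a b :: real
  assumes mono: "mono g"
    and leftcont: "\<And>t. continuous (at_left t) g"
    and ab: "a < b"
    and a_notin: "a \<notin> Nminus g"
    and b_notin: "b \<notin> Dg g \<union> Cg g \<union> Nplus g"
  shows "(\<forall>t\<in>{a..b}.
            (tstar g t \<in> D1 g a b \<union> D2 g a b \<union> D3 g a b \<longrightarrow>
               (g_differentiable g a b (deltag_restr g a b) t \<longleftrightarrow>
                ((\<lambda>s. deltag_restr g a b s / (g s - g t)) \<longlongrightarrow> 0)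
                  (at (tstar g t) within (Dg g \<inter> {a..b} \<inter> lside g (tstar g t)))))
          \<and> (tstar g t \<notin> D1 g a b \<union> D2 g a b \<union> D3 g a b \<longrightarrow>
               g_differentiable g a b (deltag_restr g a b) t)
          \<and> (g_differentiable g a b (deltag_restr g a b) t \<longrightarrow>
               has_gderiv g a b (deltag_restr g a b) t (- indicator (Dg g) (tstar g t))))
       \<and> ((\<forall>t\<in>D1 g a b \<union> D2 g a b \<union> D3 g a b.
             ((\<lambda>s. deltag_restr g a b s / (g s - g t)) \<longlongrightarrow> 0)
               (at t within (Dg g \<inter> {a..b} \<inter> lside g t)))
          \<longrightarrow> (\<forall>t\<in>{a..b}. has_gderiv g a b (deltag_restr g a b) t
                              (- indicator (Dg g) (tstar g t))))"
proof -
  have "gctx g" unfolding gctx_def using mono leftcont by blast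
  then interpret gctx g .
  note P = pt[OF ab a_notin b_notin]
  show ?thesis
  proof (intro conjI ballI impI)
    fix t assume "t \<in> {a..b}"
    hence t: "a \<le> t" "t \<le> b" by auto
    show "tstar g t \<in> D1 g a b \<union> D2 g a b \<union> D3 g a b \<Longrightarrow>
               (g_differentiable g a b (deltag_restr g a b) t \<longleftrightarrow>
                ((\<lambda>s. deltag_restr g a b s / (g s - g t)) \<longlongrightarrow> 0)
                  (at (tstar g t) within (Dg g \<inter> {a..b} \<inter> lside g (tstar g t))))"
      using P[OF t] by blast
    show "tstar g t \<notin> D1 g a b \<union> D2 g a b \<union> D3 g a b \<Longrightarrow>
               g_differentiable g a b (deltag_restr g a b) t"
      using P[OF t] by blast
    show "g_differentiable g a b (deltag_restr g a b) t \<Longrightarrow>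
               has_gderiv g a b (deltag_restr g a b) t (- indicator (Dg g) (tstar g t))"
      using P[OF t] by blast
  next
    fix t
    assume H: "\<forall>t\<in>D1 g a b \<union> D2 g a b \<union> D3 g a b.
             ((\<lambda>s. deltag_restr g a b s / (g s - g t)) \<longlongrightarrow> 0)
               (at t within (Dg g \<inter> {a..b} \<inter> lside g t))"
      and "t \<in> {a..b}"
    hence t: "a \<le> t" "t \<le> b" by auto
    show "has_gderiv g a b (deltag_restr g a b) t (- indicator (Dg g) (tstar g t))"
    proof (cases "tstar g t \<in> D1 g a b \<union> D2 g a b \<union> D3 g a b")
      case True
      with H have "((\<lambda>s. deltag_restr g a b s / (g s - g (tstar g t))) \<longlongrightarrow> 0)
               (at (tstar g t) within (Dg g \<inter> {a..b} \<inter> lside g (tstar g t)))" by blast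
      thus ?thesis using P[OF t] by blast
    next
      case False
      thus ?thesis using P[OF t] by blast
    qed
  qed
qed


end
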